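(* Fix integers $n,L\ge1$ and $s>0$. Consider the $L$-layer linear Transformer acting on $Z_l\in\mathbb{R}^{n\times n}$ by $$Z_{l+1}=Z_l+W^V_l Z_l Z_l^\top (W^Q_l)^\top W^K_l Z_l+W^R_l Z_l,$$ with weights $W^V_l,W^Q_l,W^K_l,W^R_l\in\mathbb{R}^{n\times n}$, and for a graph Laplacian $\mathcal{L}$ let the input be $Z_0^\top=I_{n\times n}-3^{-L}s\mathcal{L}$. Then there exists a choice of the weights such that for every graph on $n$ vertices whose Laplacian $\mathcal{L}$ has largest eigenvalue $\lambda_{\max}$ satisfying $s\lambda_{\max}\le 3^L$, $$\left\|Z_L-\exp(-s\mathcal{L})\right\|_2\le 3^{-L+1}s^2\lambda_{\max}^2 .$$
   Context: A graph has $n$ vertices, $d$ edges and positive edge resistances $r_j$; graphs are connected. With an arbitrary edge orientation, the incidence matrix $B\in\mathbb{R}^{n\times d}$ has $B_{ij}=\mp1/\sqrt{r_j}$ if $e_j$ leaves/enters vertex $i$ and $0$ otherwise, and the Laplacian is $\mathcal{L}=BB^\top$. $\exp(-s\mathcal{L})$ is the matrix exponential and $\|\cdot\|_2$ the spectral norm. *)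

theory Defs
  imports "HOL-Analysis.Analysis"
begin

text \<open>A weighted graph on the vertex type 'n: a list of edges (u, v, r), oriented from u to v,
  with resistance r. Multiple edges are allowed, self-loops are not.\<close>
type_synonym 'n graph = "('n \<times> 'n \<times> real) list"

definition adj_rel :: "'n graph \<Rightarrow> ('n \<times> 'n) set" where
  "adj_rel E = {(u, v). \<exists>r. (u, v, r) \<in> set E \<or> (v, u, r) \<in> set E}"

definition valid_graph :: "'n graph \<Rightarrow> bool" where
  "valid_graph E \<longleftrightarrow>
     (\<forall>(u, v, r) \<in> set E. u \<noteq> v \<and> r > 0) \<and>
     (\<forall>a b. (a, b) \<in> (adj_rel E)\<^sup>*)"

definition incidence :: "'n graph \<Rightarrow> 'n \<Rightarrow> nat \<Rightarrow> real" where
  "incidence E i j = (case E ! j of (u, v, r) \<Rightarrow>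
       if i = u then - 1 / sqrt r else if i = v then 1 / sqrt r else 0)"

definition laplacian :: "'n::finite graph \<Rightarrow> real^'n^'n" where
  "laplacian E = (\<chi> i k. \<Sum>j<length E. incidence E i j * incidence E k j)"

definition is_eigenvalue :: "real^'n^'n \<Rightarrow> real \<Rightarrow> bool" where
  "is_eigenvalue A \<mu> \<longleftrightarrow> (\<exists>v. v \<noteq> 0 \<and> A *v v = \<mu> *\<^sub>R v)"

definition lambda_max :: "real^'n^'n \<Rightarrow> real" where
  "lambda_max A = Max {\<mu>. is_eigenvalue A \<mu>}"

fun mat_pow :: "real^'n^'n \<Rightarrow> nat \<Rightarrow> real^'n^'n" where
  "mat_pow A 0 = mat 1"
| "mat_pow A (Suc k) = A ** mat_pow A k"

definition mat_exp :: "real^'n^'n \<Rightarrow> real^'n^'n" where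
  "mat_exp A = (\<Sum>k. (1 / fact k) *\<^sub>R mat_pow A k)"

definition spec_norm :: "real^'n^'n \<Rightarrow> real" where
  "spec_norm A = onorm (\<lambda>x. A *v x)"

definition layer :: "real^'n^'n \<Rightarrow> real^'n^'n \<Rightarrow> real^'n^'n \<Rightarrow> real^'n^'n \<Rightarrow> real^'n^'n \<Rightarrow> real^'n^'n" where
  "layer WV WQ WK WR Z = Z + WV ** Z ** transpose Z ** transpose WQ ** WK ** Z + WR ** Z"

fun transformer :: "(nat \<Rightarrow> real^'n^'n) \<Rightarrow> (nat \<Rightarrow> real^'n^'n) \<Rightarrow> (nat \<Rightarrow> real^'n^'n) \<Rightarrow>
    (nat \<Rightarrow> real^'n^'n) \<Rightarrow> real^'n^'n \<Rightarrow> nat \<Rightarrow> real^'n^'n" where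
  "transformer WV WQ WK WR Z0 0 = Z0"
| "transformer WV WQ WK WR Z0 (Suc l) =
     layer (WV l) (WQ l) (WK l) (WR l) (transformer WV WQ WK WR Z0 l)"

end

theory Submission
  imports Defs
begin

definition pmat :: "real^'n::finite \<Rightarrow> real^'n^'n" where
  "pmat v = (\<chi> i j. v$i * v$j)"

definition SM :: "(real^'n::finite) set \<Rightarrow> (real^'n \<Rightarrow> real) \<Rightarrow> real^'n^'n" where
  "SM B f = (\<Sum>v\<in>B. f v *\<^sub>R pmat v)"

definition onb :: "(real^'n::finite) set \<Rightarrow> bool" where
  "onb B \<longleftrightarrow> finite B \<and> pairwise orthogonal B \<and> (\<forall>v\<in>B. norm v = 1) \<and> span B = UNIV"

lemma pmat_mv: "pmat v *v x = (v \<bullet> x) *\<^sub>R v"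
  by (simp add: pmat_def matrix_vector_mult_def inner_vec_def vec_eq_iff sum_distrib_left mult_ac)

lemma sum_mv: "finite B \<Longrightarrow> (\<Sum>v\<in>B. A v) *v x = (\<Sum>v\<in>B. A v *v x)"
  by (induction B rule: finite_induct) (auto simp: matrix_vector_mult_add_rdistrib)

lemma SM_mv: "finite B \<Longrightarrow> SM B f *v x = (\<Sum>v\<in>B. (f v * (v \<bullet> x)) *\<^sub>R v)"
  unfolding SM_def by (simp add: sum_mv scaleR_matrix_vector_assoc[symmetric] pmat_mv)

lemma onb_coef:
  assumes "onb B" "v \<in> B"
  shows "v \<bullet> (\<Sum>w\<in>B. a w *\<^sub>R w) = a v"
proof -
  have "v \<bullet> (\<Sum>w\<in>B. a w *\<^sub>R w) = (\<Sum>w\<in>B. (if w = v then a w else 0))"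
    unfolding inner_sum_right
  proof (rule sum.cong)
    fix w assume w: "w \<in> B"
    show "v \<bullet> (a w *\<^sub>R w) = (if w = v then a w else 0)"
    proof (cases "w = v")
      case True
      then have "v \<bullet> v = 1" using assms w unfolding onb_def
        by (metis norm_eq_1)
      then show ?thesis using True by simp
    next
      case False
      have "pairwise orthogonal B" using assms onb_def by blast
      then have "orthogonal v w" using assms(2) w False by (metis pairwiseD)
      then have "v \<bullet> w = 0" by (simp add: orthogonal_def)
      then show ?thesis using False by simp
    qed
  qed simp
  also have "\<dots> = a v" using assms unfolding onb_def by (simp add: sum.delta')
  finally show ?thesis .
qed

lemma onb_expand:
  assumes "onb B"
  shows "x = (\<Sum>v\<in>B. (v \<bullet> x) *\<^sub>R v)"
proof -
  have fin: "finite B" using assms onb_def by blast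
  have "x \<in> span B" using assms onb_def by blast
  then obtain u where u: "x = (\<Sum>v\<in>B. u v *\<^sub>R v)"
    using span_finite[OF fin] by blast
  have "\<And>v. v \<in> B \<Longrightarrow> v \<bullet> x = u v" using onb_coef[OF assms] u by simp
  then show ?thesis using u by (metis (no_types, lifting) sum.cong)
qed

lemma onb_norm2:
  assumes "onb B"
  shows "(norm (\<Sum>v\<in>B. a v *\<^sub>R v))\<^sup>2 = (\<Sum>v\<in>B. (a v)\<^sup>2)"
proof -
  let ?y = "\<Sum>v\<in>B. a v *\<^sub>R v"
  have "(norm ?y)\<^sup>2 = ?y \<bullet> ?y" by (simp add: power2_norm_eq_inner)
  also have "\<dots> = (\<Sum>v\<in>B. a v * (v \<bullet> ?y))" by (simp add: inner_sum_left)
  also have "\<dots> = (\<Sum>v\<in>B. (a v)\<^sup>2)"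
    using onb_coef[OF assms] by (simp add: power2_eq_square)
  finally show ?thesis .
qed

lemma SM_mult:
  assumes "onb B"
  shows "SM B f ** SM B g = SM B (\<lambda>v. f v * g v)"
proof -
  have fin: "finite B" using assms onb_def by blast
  show ?thesis
    unfolding matrix_eq
  proof
    fix x
    have "(SM B f ** SM B g) *v x = SM B f *v (SM B g *v x)"
      by (simp add: matrix_vector_mul_assoc)
    also have "\<dots> = (\<Sum>v\<in>B. (f v * (g v * (v \<bullet> x))) *\<^sub>R v)"
      unfolding SM_mv[OF fin] SM_mv[OF fin, of g] using onb_coef[OF assms] by simp
    also have "\<dots> = SM B (\<lambda>v. f v * g v) *v x"
      unfolding SM_mv[OF fin] by (simp add: mult_ac)
    finally show "(SM B f ** SM B g) *v x = SM B (\<lambda>v. f v * g v) *v x" .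
  qed
qed

lemma SM_one:
  assumes "onb B"
  shows "SM B (\<lambda>_. 1) = mat 1"
  unfolding matrix_eq
  using assms onb_expand[OF assms] by (simp add: SM_mv onb_def)

lemma SM_transpose: "transpose (SM B f) = SM B f"
proof -
  have "\<And>i j. SM B f $ i $ j = (\<Sum>v\<in>B. f v * (v$i * v$j))"
    unfolding SM_def by (simp add: pmat_def)
  then show ?thesis by (simp add: vec_eq_iff transpose_def mult_ac)
qed

lemma SM_add: "SM B f + SM B g = SM B (\<lambda>v. f v + g v)"
  unfolding SM_def by (simp add: sum.distrib scaleR_add_left)

lemma SM_diff: "SM B f - SM B g = SM B (\<lambda>v. f v - g v)"
  unfolding SM_def by (simp add: sum_subtractf scaleR_diff_left)

lemma SM_scale: "c *\<^sub>R SM B f = SM B (\<lambda>v. c * f v)"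
  unfolding SM_def by (simp add: scaleR_sum_right)

lemma SM_uminus: "- SM B f = SM B (\<lambda>v. - f v)"
  unfolding SM_def by (simp add: sum_negf)

lemma SM_pow:
  assumes "onb B"
  shows "mat_pow (SM B f) k = SM B (\<lambda>v. f v ^ k)"
  by (induction k) (simp_all add: SM_one[OF assms] SM_mult[OF assms])

lemma SM_exp:
  assumes "onb B"
  shows "mat_exp (SM B f) = SM B (\<lambda>v. exp (f v))"
proof -
  have fin: "finite B" using assms onb_def by blast
  have eq: "(\<lambda>k. (1 / fact k) *\<^sub>R mat_pow (SM B f) k) =
      (\<lambda>k. \<Sum>v\<in>B. (f v ^ k / fact k) *\<^sub>R pmat v)"
    by (simp add: SM_pow[OF assms] SM_scale) (simp add: SM_def)
  have "\<And>v. (\<lambda>k. (f v ^ k / fact k) *\<^sub>R pmat v) sums (exp (f v) *\<^sub>R pmat v)"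
    using sums_scaleR_left[OF exp_converges] by (simp add: divide_inverse mult_ac)
  then have "(\<lambda>k. \<Sum>v\<in>B. (f v ^ k / fact k) *\<^sub>R pmat v) sums SM B (\<lambda>v. exp (f v))"
    unfolding SM_def by (rule sums_sum)
  then show ?thesis unfolding mat_exp_def eq by (rule sums_unique[symmetric])
qed

lemma SM_norm:
  assumes "onb B" "b \<ge> 0" "\<And>v. v \<in> B \<Longrightarrow> \<bar>g v\<bar> \<le> b"
  shows "spec_norm (SM B g) \<le> b"
  unfolding spec_norm_def
proof (rule onorm_le)
  fix x
  have fin: "finite B" using assms onb_def by blast
  have "(norm (SM B g *v x))\<^sup>2 = (\<Sum>v\<in>B. (g v * (v \<bullet> x))\<^sup>2)"
    unfolding SM_mv[OF fin] by (rule onb_norm2[OF assms(1)])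
  also have "\<dots> \<le> (\<Sum>v\<in>B. b\<^sup>2 * (v \<bullet> x)\<^sup>2)"
  proof (rule sum_mono)
    fix v assume "v \<in> B"
    then have "\<bar>g v\<bar>\<^sup>2 \<le> b\<^sup>2" using assms(3) by (intro power_mono) auto
    then have "(g v)\<^sup>2 \<le> b\<^sup>2" by simp
    then show "(g v * (v \<bullet> x))\<^sup>2 \<le> b\<^sup>2 * (v \<bullet> x)\<^sup>2"
      by (simp add: power_mult_distrib mult_right_mono)
  qed
  also have "\<dots> = b\<^sup>2 * (norm x)\<^sup>2"
  proof -
    have e: "norm x = norm (\<Sum>v\<in>B. (v \<bullet> x) *\<^sub>R v)"
      by (rule arg_cong[where f=norm], rule onb_expand[OF assms(1)])
    have "(norm x)\<^sup>2 = (\<Sum>v\<in>B. (v \<bullet> x)\<^sup>2)"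
      by (simp only: e onb_norm2[OF assms(1)])
    then show ?thesis by (simp add: sum_distrib_left)
  qed
  also have "\<dots> = (b * norm x)\<^sup>2" by (simp add: power_mult_distrib)
  finally have "(norm (SM B g *v x))\<^sup>2 \<le> (b * norm x)\<^sup>2" .
  then show "norm (SM B g *v x) \<le> b * norm x"
    by (rule power2_le_imp_le) (use assms(2) in simp)
qed

lemma sym_inner:
  fixes K :: "real^'n::finite^'n"
  assumes "transpose K = K"
  shows "(K *v x) \<bullet> y = x \<bullet> (K *v y)"
proof -
  have "K *v x = x v* K" using transpose_matrix_vector[of K x] assms by simp
  then show ?thesis by (simp add: dot_lmul_matrix)
qed

lemma quad_scale: "(c *\<^sub>R w) \<bullet> (K *v (c *\<^sub>R w)) = c\<^sup>2 * (w \<bullet> (K *v w))"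
  for K :: "real^'n::finite^'n"
  by (simp add: matrix_vector_mult_scaleR power2_eq_square)

lemma small_nonpos:
  fixes a C :: real
  assumes "a \<ge> 0" "\<And>t. t > 0 \<Longrightarrow> 2 * a \<le> t * C"
  shows "a = 0"
proof (rule ccontr)
  assume "a \<noteq> 0"
  then have a: "a > 0" using assms(1) by simp
  define t where "t = a / (\<bar>C\<bar> + 1)"
  have t: "t > 0" using a by (simp add: t_def)
  have "t * C \<le> t * \<bar>C\<bar>" using t by (simp add: mult_left_mono)
  also have "\<dots> < a" using a by (simp add: t_def field_simps)
  finally show False using assms(2)[OF t] a by simp
qed

lemma spectral_sub:
  fixes K :: "real^'n::finite^'n"
  assumes sym: "transpose K = K"
  shows "subspace S \<Longrightarrow> (\<forall>x\<in>S. K *v x \<in> S) \<Longrightarrow>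
    \<exists>B. B \<subseteq> S \<and> pairwise orthogonal B \<and>
        (\<forall>v\<in>B. norm v = 1 \<and> K *v v = (v \<bullet> (K *v v)) *\<^sub>R v) \<and> span B = S"
proof (induction "dim S" arbitrary: S rule: less_induct)
  case less
  show ?case
  proof (cases "S = {0}")
    case True
    then show ?thesis by (intro exI[of _ "{}"]) auto
  next
    case False
    then obtain x where x: "x \<in> S" "x \<noteq> 0" using less.prems(1) subspace_0 by blast
    define T where "T = S \<inter> sphere 0 1"
    define q where "q = (\<lambda>y. y \<bullet> (K *v y))"
    have "compact T" unfolding T_def
      using closed_subspace[OF less.prems(1)] compact_sphere by (rule closed_Int_compact)
    moreover have "(1 / norm x) *\<^sub>R x \<in> T" unfolding T_def
      using x less.prems(1) by (simp add: subspace_scale)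
    then have "T \<noteq> {}" by blast
    moreover have "continuous_on T q" unfolding q_def by (intro continuous_intros)
    ultimately obtain v where v: "v \<in> T" and vmax: "\<And>y. y \<in> T \<Longrightarrow> q y \<le> q v"
      using continuous_attains_sup by metis
    define \<mu> where "\<mu> = q v"
    have vS: "v \<in> S" and vn: "norm v = 1" using v by (auto simp: T_def)
    have vv: "v \<bullet> v = 1" using vn by (simp add: norm_eq_1)
    have qb: "q w \<le> \<mu> * (w \<bullet> w)" if w: "w \<in> S" for w
    proof (cases "w = 0")
      case True then show ?thesis by (simp add: q_def)
    next
      case False
      have "(1 / norm w) *\<^sub>R w \<in> T" unfolding T_def
        using w False less.prems(1) by (simp add: subspace_scale)
      then have "q ((1 / norm w) *\<^sub>R w) \<le> \<mu>" using vmax \<mu>_def by blast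
      then have "(1 / norm w)\<^sup>2 * q w \<le> \<mu>" unfolding q_def quad_scale .
      then have "q w \<le> \<mu> * (norm w)\<^sup>2" using False
        by (simp add: field_simps power2_eq_square)
      then show ?thesis by (simp add: power2_norm_eq_inner)
    qed
    define d where "d = K *v v - \<mu> *\<^sub>R v"
    have dS: "d \<in> S" unfolding d_def using less.prems vS
      by (simp add: subspace_diff subspace_scale)
    have "d \<bullet> d = 0"
    proof (rule small_nonpos)
      show "d \<bullet> d \<ge> 0" by simp
      fix t :: real assume t: "t > 0"
      have "v + t *\<^sub>R d \<in> S" using less.prems(1) vS dS by (simp add: subspace_add subspace_scale)
      then have 1: "q (v + t *\<^sub>R d) \<le> \<mu> * ((v + t *\<^sub>R d) \<bullet> (v + t *\<^sub>R d))" by (rule qb)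
      have kd: "v \<bullet> (K *v d) = (K *v v) \<bullet> d" using sym_inner[OF sym] by simp
      have "q (v + t *\<^sub>R d) = \<mu> + 2 * t * (d \<bullet> (K *v v)) + t\<^sup>2 * q d"
        unfolding q_def \<mu>_def using kd
        by (simp add: matrix_vector_right_distrib matrix_vector_mult_scaleR inner_add_left
            inner_add_right power2_eq_square inner_commute algebra_simps)
      moreover have "(v + t *\<^sub>R d) \<bullet> (v + t *\<^sub>R d) = 1 + 2 * t * (v \<bullet> d) + t\<^sup>2 * (d \<bullet> d)"
        using vv by (simp add: inner_add_left inner_add_right power2_eq_square inner_commute algebra_simps)
      moreover have "d \<bullet> (K *v v) - \<mu> * (v \<bullet> d) = d \<bullet> d"
        unfolding d_def by (simp add: inner_diff_left inner_diff_right inner_commute algebra_simps)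
      ultimately have "2 * t * (d \<bullet> d) \<le> t\<^sup>2 * (\<mu> * (d \<bullet> d) - q d)"
        using 1 by (simp add: algebra_simps)
      then show "2 * (d \<bullet> d) \<le> t * (\<mu> * (d \<bullet> d) - q d)"
        using t by (simp add: power2_eq_square mult.assoc)
    qed
    then have Kv: "K *v v = \<mu> *\<^sub>R v" unfolding d_def by simp
    have Kvq: "K *v v = (v \<bullet> (K *v v)) *\<^sub>R v" using Kv \<mu>_def q_def by simp
    define S' where "S' = S \<inter> {y. v \<bullet> y = 0}"
    have sub': "subspace S'" unfolding S'_def
      by (rule subspace_inter[OF less.prems(1) subspace_hyperplane])
    have inv': "\<forall>y\<in>S'. K *v y \<in> S'"
    proof
      fix y assume y: "y \<in> S'"
      have "v \<bullet> (K *v y) = (K *v v) \<bullet> y" using sym_inner[OF sym] by simp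
      also have "\<dots> = 0" using y Kv by (simp add: S'_def)
      finally show "K *v y \<in> S'" using y less.prems(2) by (simp add: S'_def)
    qed
    have "v \<notin> S'" using vv by (simp add: S'_def)
    moreover have "S' \<subseteq> S" by (simp add: S'_def)
    ultimately have "S' \<subset> S" using vS by blast
    moreover have "span S' = S'" "span S = S" using sub' less.prems(1) by (metis span_eq_iff)+
    ultimately have "dim S' < dim S" by (metis dim_psubset)
    from less.hyps[OF this sub' inv'] obtain B' where B':
      "B' \<subseteq> S'" "pairwise orthogonal B'"
      "\<forall>v\<in>B'. norm v = 1 \<and> K *v v = (v \<bullet> (K *v v)) *\<^sub>R v" "span B' = S'" by blast
    show ?thesis
    proof (intro exI[of _ "insert v B'"] conjI)
      show "insert v B' \<subseteq> S" using vS B'(1) by (auto simp: S'_def)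
      show "pairwise orthogonal (insert v B')"
        using B'(1,2) by (auto simp: pairwise_insert S'_def orthogonal_def inner_commute)
      show "\<forall>w\<in>insert v B'. norm w = 1 \<and> K *v w = (w \<bullet> (K *v w)) *\<^sub>R w"
        using B'(3) vn Kvq by auto
      show "span (insert v B') = S"
      proof (rule span_subspace)
        show "insert v B' \<subseteq> S" using vS B'(1) by (auto simp: S'_def)
        show "S \<subseteq> span (insert v B')"
        proof
          fix y assume y: "y \<in> S"
          have "y - (v \<bullet> y) *\<^sub>R v \<in> S'" using y vS vv less.prems(1)
            by (simp add: S'_def subspace_diff subspace_scale inner_diff_right)
          then show "y \<in> span (insert v B')" using B'(4) span_breakdown_eq by blast
        qed
        show "subspace S" by (rule less.prems(1))
      qed
    qed
  qed
qed

lemma spectral: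
  fixes K :: "real^'n::finite^'n"
  assumes sym: "transpose K = K"
  shows "\<exists>B. onb B \<and> (\<forall>v\<in>B. K *v v = (v \<bullet> (K *v v)) *\<^sub>R v)"
proof -
  obtain B where B: "pairwise orthogonal B"
        "\<forall>v\<in>B. norm v = 1 \<and> K *v v = (v \<bullet> (K *v v)) *\<^sub>R v" "span B = UNIV"
    using spectral_sub[OF sym, of UNIV] by auto
  have "0 \<notin> B" using B(2) by auto
  then have "independent B" using B(1) by (rule pairwise_orthogonal_independent[rotated])
  then have "finite B" by (rule independent_imp_finite)
  then show ?thesis using B unfolding onb_def by blast
qed

lemma pow_diff_le:
  fixes a b :: real
  assumes "0 \<le> a" "a \<le> b" "b \<le> 1"
  shows "b ^ n - a ^ n \<le> real n * (b - a)"
proof (induction n)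
  case 0 then show ?case by simp
next
  case (Suc n)
  have an: "a ^ n \<le> 1" using assms by (simp add: power_le_one)
  have d: "0 \<le> b ^ n - a ^ n" using assms by (simp add: power_mono)
  have "b ^ Suc n - a ^ Suc n = b * (b ^ n - a ^ n) + a ^ n * (b - a)"
    by (simp add: algebra_simps)
  also have "\<dots> \<le> (b ^ n - a ^ n) + (b - a)"
    using assms an d by (intro add_mono) (simp_all add: mult_left_le_one_le mult_left_le)
  also have "\<dots> \<le> real (Suc n) * (b - a)" using Suc by (simp add: algebra_simps)
  finally show ?case .
qed

lemma scalar_bound:
  fixes y :: real and N :: nat
  assumes "N \<ge> 1" "0 \<le> y" "y \<le> real N"
  shows "\<bar>(1 - y / real N) ^ N - exp (- y)\<bar> \<le> y\<^sup>2 / real N"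
proof -
  define t where "t = y / real N"
  have Npos: "real N > 0" using assms by simp
  have t0: "0 \<le> t" and t1: "t \<le> 1" using assms Npos by (auto simp: t_def field_simps)
  define a where "a = 1 - t"
  define b where "b = exp (- t)"
  have a0: "0 \<le> a" using t1 by (simp add: a_def)
  have ab: "a \<le> b" unfolding a_def b_def using exp_ge_add_one_self[of "- t"] by simp
  have b1: "b \<le> 1" using t0 by (simp add: b_def)
  have "exp t \<ge> 1 + t" by simp
  then have "b \<le> 1 / (1 + t)" unfolding b_def using t0
    by (simp add: exp_minus field_simps)
  also have "\<dots> \<le> 1 - t + t\<^sup>2" using t0
    by (simp add: field_simps power2_eq_square)
  finally have bb: "b - a \<le> t\<^sup>2" by (simp add: a_def)
  have e: "exp (- y) = b ^ N"
    unfolding b_def exp_of_nat_mult[symmetric] using Npos by (simp add: t_def)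
  have "a ^ N \<le> b ^ N" using a0 ab by (simp add: power_mono)
  then have "\<bar>a ^ N - b ^ N\<bar> = b ^ N - a ^ N" by simp
  also have "\<dots> \<le> real N * (b - a)" using pow_diff_le[OF a0 ab b1] .
  also have "\<dots> \<le> real N * t\<^sup>2" using bb Npos by simp
  also have "\<dots> = y\<^sup>2 / real N" using Npos by (simp add: t_def power2_eq_square field_simps)
  finally show ?thesis using e by (simp add: a_def t_def)
qed

lemma lap_sym: "transpose (laplacian E) = laplacian E"
  by (simp add: vec_eq_iff transpose_def laplacian_def mult.commute)

lemma lap_psd: "0 \<le> x \<bullet> (laplacian E *v x)"
proof -
  let ?b = "incidence E"
  let ?m = "length E"
  have "x \<bullet> (laplacian E *v x) = (\<Sum>i\<in>UNIV. \<Sum>k\<in>UNIV. \<Sum>j<?m. (?b i j * x$i) * (?b k j * x$k))"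
    by (simp add: inner_vec_def matrix_vector_mult_def laplacian_def sum_distrib_left
        sum_distrib_right mult_ac)
  also have "\<dots> = (\<Sum>i\<in>UNIV. \<Sum>j<?m. \<Sum>k\<in>UNIV. (?b i j * x$i) * (?b k j * x$k))"
    by (rule sum.cong[OF refl], rule sum.swap)
  also have "\<dots> = (\<Sum>j<?m. \<Sum>i\<in>UNIV. \<Sum>k\<in>UNIV. (?b i j * x$i) * (?b k j * x$k))"
    by (rule sum.swap)
  also have "\<dots> = (\<Sum>j<?m. (\<Sum>i\<in>UNIV. ?b i j * x$i)\<^sup>2)"
    by (simp add: power2_eq_square sum_product)
  also have "\<dots> \<ge> 0" by (simp add: sum_nonneg)
  finally show ?thesis .
qed

lemma eig_in:
  fixes K :: "real^'n::finite^'n"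
  assumes sym: "transpose K = K" and B: "onb B"
    and eig: "\<forall>v\<in>B. K *v v = (v \<bullet> (K *v v)) *\<^sub>R v"
    and mu: "is_eigenvalue K \<mu>"
  shows "\<mu> \<in> (\<lambda>v. v \<bullet> (K *v v)) ` B"
proof -
  obtain u where u: "u \<noteq> 0" "K *v u = \<mu> *\<^sub>R u" using mu is_eigenvalue_def by blast
  have "\<exists>w\<in>B. w \<bullet> u \<noteq> 0"
  proof (rule ccontr)
    assume "\<not> ?thesis"
    then have "(\<Sum>v\<in>B. (v \<bullet> u) *\<^sub>R v) = 0" by simp
    then show False using onb_expand[OF B, of u] u(1) by simp
  qed
  then obtain w where w: "w \<in> B" "w \<bullet> u \<noteq> 0" by blast
  have "\<mu> * (w \<bullet> u) = w \<bullet> (K *v u)" using u(2) by simp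
  also have "\<dots> = (K *v w) \<bullet> u" using sym_inner[OF sym] by simp
  also have "\<dots> = (w \<bullet> (K *v w)) * (w \<bullet> u)" using eig w(1)
    by (metis inner_scaleR_left)
  finally have "\<mu> = w \<bullet> (K *v w)" using w(2) by simp
  then show ?thesis using w(1) by blast
qed

lemma eig_le_max:
  fixes K :: "real^'n::finite^'n"
  assumes sym: "transpose K = K" and B: "onb B"
    and eig: "\<forall>v\<in>B. K *v v = (v \<bullet> (K *v v)) *\<^sub>R v"
    and v: "v \<in> B"
  shows "v \<bullet> (K *v v) \<le> lambda_max K"
proof -
  have "{\<mu>. is_eigenvalue K \<mu>} \<subseteq> (\<lambda>v. v \<bullet> (K *v v)) ` B"
    using eig_in[OF sym B eig] by blast
  moreover have "finite ((\<lambda>v. v \<bullet> (K *v v)) ` B)" using B by (simp add: onb_def)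
  ultimately have fin: "finite {\<mu>. is_eigenvalue K \<mu>}" by (rule finite_subset)
  have "v \<noteq> 0" using B v by (auto simp: onb_def)
  then have "is_eigenvalue K (v \<bullet> (K *v v))" using eig v unfolding is_eigenvalue_def by blast
  then show ?thesis unfolding lambda_max_def using fin by simp
qed

lemma K_SM:
  fixes K :: "real^'n::finite^'n"
  assumes B: "onb B" and eig: "\<forall>v\<in>B. K *v v = (v \<bullet> (K *v v)) *\<^sub>R v"
  shows "K = SM B (\<lambda>v. v \<bullet> (K *v v))"
  unfolding matrix_eq
proof
  fix x
  have fin: "finite B" using B onb_def by blast
  have "K *v x = K *v (\<Sum>v\<in>B. (v \<bullet> x) *\<^sub>R v)" using onb_expand[OF B, of x] by metis
  also have "\<dots> = (\<Sum>v\<in>B. (v \<bullet> x) *\<^sub>R (K *v v))"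
    by (simp add: linear_sum[OF matrix_vector_mul_linear] o_def matrix_vector_mult_scaleR)
  also have "\<dots> = SM B (\<lambda>v. v \<bullet> (K *v v)) *v x"
    unfolding SM_mv[OF fin]
  proof (rule sum.cong[OF refl])
    fix w assume w: "w \<in> B"
    have "K *v w = (w \<bullet> (K *v w)) *\<^sub>R w" using eig w by blast
    then show "(w \<bullet> x) *\<^sub>R (K *v w) = ((w \<bullet> (K *v w)) * (w \<bullet> x)) *\<^sub>R w"
      by (metis scaleR_scaleR mult.commute)
  qed
  finally show "K *v x = SM B (\<lambda>v. v \<bullet> (K *v v)) *v x" .
qed

lemma neg_mult: "(- A) ** (B :: real^'n::finite^'n) = - (A ** B)"
  by (simp add: vec_eq_iff matrix_matrix_mult_def sum_negf)

lemma cube_pow: "(c::real) ^ (3 ^ l) * c ^ (3 ^ l) * c ^ (3 ^ l) = c ^ (3 * 3 ^ l)"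
proof -
  have "c ^ (3 * 3 ^ l) = (c ^ (3 ^ l)) ^ 3" by (simp add: power_mult[symmetric] mult.commute)
  then show ?thesis by (simp add: power3_eq_cube)
qed

theorem lemma5:
  fixes s :: real and L :: nat
  assumes "L \<ge> 1" and "s > 0"
  shows "\<exists>WV WQ WK WR :: nat \<Rightarrow> real^'n::finite^'n.
     \<forall>E :: 'n graph. valid_graph E \<longrightarrow>
       s * lambda_max (laplacian E) \<le> 3 ^ L \<longrightarrow>
       spec_norm (transformer WV WQ WK WR
                    (transpose (mat 1 - (s / 3 ^ L) *\<^sub>R laplacian E)) L
                  - mat_exp (- s *\<^sub>R laplacian E))
         \<le> (3::real) powr (1 - real L) * s\<^sup>2 * (lambda_max (laplacian E))\<^sup>2"
proof (intro exI allI impI)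
  fix E :: "'n graph"
  assume hl: "s * lambda_max (laplacian E) \<le> 3 ^ L"
  define K where "K = laplacian E"
  define lam where "lam = lambda_max K"
  define N :: nat where "N = 3 ^ L"
  have Nr: "real N = 3 ^ L" by (simp add: N_def)
  have N1: "N \<ge> 1" by (simp add: N_def)
  have sym: "transpose K = K" unfolding K_def by (rule lap_sym)
  obtain B where B: "onb B" and eig: "\<forall>v\<in>B. K *v v = (v \<bullet> (K *v v)) *\<^sub>R v"
    using spectral[OF sym] by blast
  define \<kappa> where "\<kappa> = (\<lambda>v. v \<bullet> (K *v v))"
  have KS: "K = SM B \<kappa>" unfolding \<kappa>_def by (rule K_SM[OF B eig])
  define c where "c = (\<lambda>v. 1 - s / 3 ^ L * \<kappa> v)"
  have Z0: "transpose (mat 1 - (s / 3 ^ L) *\<^sub>R K) = SM B c"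
    unfolding c_def KS SM_one[OF B, symmetric] SM_scale SM_diff SM_transpose ..
  have TL: "transformer (\<lambda>_. mat 1) (\<lambda>_. mat 1) (\<lambda>_. mat 1) (\<lambda>_. - mat 1) (SM B c) l
      = SM B (\<lambda>v. c v ^ (3 ^ l))" for l
  proof (induction l)
    case 0 then show ?case by simp
  next
    case (Suc l)
    show ?case
      by (simp add: Suc layer_def neg_mult SM_transpose SM_mult[OF B] SM_uminus SM_add cube_pow)
  qed
  have EX: "mat_exp (- s *\<^sub>R K) = SM B (\<lambda>v. exp (- s * \<kappa> v))"
    unfolding KS SM_scale SM_exp[OF B] by simp
  have D: "transformer (\<lambda>_. mat 1) (\<lambda>_. mat 1) (\<lambda>_. mat 1) (\<lambda>_. - mat 1)
             (transpose (mat 1 - (s / 3 ^ L) *\<^sub>R K)) L - mat_exp (- s *\<^sub>R K)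
      = SM B (\<lambda>v. c v ^ N - exp (- s * \<kappa> v))"
    unfolding Z0 TL EX SM_diff N_def ..
  have b0: "0 \<le> (3::real) powr (1 - real L) * s\<^sup>2 * lam\<^sup>2" by simp
  have p3: "(3::real) powr (1 - real L) = 3 / 3 ^ L"
    by (simp add: powr_diff powr_realpow)
  have "spec_norm (SM B (\<lambda>v. c v ^ N - exp (- s * \<kappa> v))) \<le> 3 powr (1 - real L) * s\<^sup>2 * lam\<^sup>2"
  proof (rule SM_norm[OF B b0])
    fix v assume v: "v \<in> B"
    define y where "y = s * \<kappa> v"
    have k0: "0 \<le> \<kappa> v" unfolding \<kappa>_def K_def by (rule lap_psd)
    have kl: "\<kappa> v \<le> lam" unfolding \<kappa>_def lam_def by (rule eig_le_max[OF sym B eig v])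
    have y0: "0 \<le> y" using k0 assms(2) by (simp add: y_def)
    have ysl: "y \<le> s * lam" using kl assms(2) by (simp add: y_def)
    have yN: "y \<le> real N" using ysl hl Nr by (simp add: lam_def K_def)
    have "\<bar>c v ^ N - exp (- s * \<kappa> v)\<bar> = \<bar>(1 - y / real N) ^ N - exp (- y)\<bar>"
      by (simp add: c_def y_def Nr)
    also have "\<dots> \<le> y\<^sup>2 / real N" by (rule scalar_bound[OF N1 y0 yN])
    also have "\<dots> \<le> (s * lam)\<^sup>2 / real N"
      using y0 ysl by (intro divide_right_mono power_mono) auto
    also have "\<dots> \<le> 3 * (s * lam)\<^sup>2 / real N" by (simp add: divide_right_mono)
    also have "\<dots> = 3 powr (1 - real L) * s\<^sup>2 * lam\<^sup>2"
      by (simp add: p3 Nr power_mult_distrib)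
    finally show "\<bar>c v ^ N - exp (- s * \<kappa> v)\<bar> \<le> 3 powr (1 - real L) * s\<^sup>2 * lam\<^sup>2" .
  qed
  then show "spec_norm (transformer (\<lambda>_. mat 1) (\<lambda>_. mat 1) (\<lambda>_. mat 1) (\<lambda>_. - mat 1)
                    (transpose (mat 1 - (s / 3 ^ L) *\<^sub>R laplacian E)) L
                  - mat_exp (- s *\<^sub>R laplacian E))
         \<le> (3::real) powr (1 - real L) * s\<^sup>2 * (lambda_max (laplacian E))\<^sup>2"
    using D by (simp add: K_def lam_def)
qed

end
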